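(* Let $X$ be a hyperbolic Riemann surface of finite type with base point $\star$, $G=\pi_1(X,\star)$, and $\rho:G\to\mathrm{PSL}(2,\mathbb C)$ a parabolic representation, with a smooth normalized Lipschitz family of spherical metrics on the fibers of $M_\rho$ with Lipschitz constant $C_\rho$. Then there exists a constant $\beta_\rho$ depending only on $C_\rho$ such that $\|\rho(g)\|\le\|\rho_{\rm can}(g)\|^{\beta_\rho}$ for all $g\in G$.
   Context: $X$ is a compact Riemann surface of genus $g$ minus $n$ points, $2-2g-n<0$, with its hyperbolic metric of curvature $-1$; $\rho_{\rm can}:G\to\mathrm{PSL}(2,\mathbb R)$ is the uniformizing representation obtained by identifying the universal cover with $\mathbb H^2$, $\star\mapsto 0$. Parabolic: loops around punctures map to parabolic elements. $\|\gamma\|$ is the operator norm of an $\mathrm{SL}(2,\mathbb C)$ representative. The suspension $M_\rho=(\mathbb H^2\times\mathbb P^1)/G$ with diagonal action $(\rho_{\rm can},\rho)$; holonomy $h_\rho(\omega)$ of the horizontal foliation along a path $\omega$; $\|h_\rho(\omega)\|=\sup_x\|d_xh_\rho(\omega)\|$ for the fiber metrics. Normalized: the fiber over $\star$ is isometric to $\mathbb P^1$ with its standard Fubini–Study metric via the natural map. Lipschitz with constant $C_\rho$: $\log\|h_\rho(\omega)\|\le C_\rho\,\mathrm{length}(\omega)$ for all smooth paths $\omega$ on $X$. *)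

theory Defs
  imports "HOL-Analysis.Analysis"
begin

type_synonym cmat = "complex^2^2"

definition psl_eq :: "cmat \<Rightarrow> cmat \<Rightarrow> bool" where
  "psl_eq A B \<longleftrightarrow> A = B \<or> A = - B"

definition mtrace :: "cmat \<Rightarrow> complex" where
  "mtrace A = A$1$1 + A$2$2"

definition mpow :: "cmat \<Rightarrow> nat \<Rightarrow> cmat" where
  "mpow A n = (((**) A) ^^ n) (mat 1)"

text \<open>Parabolic element of PSL(2,C) (represented in SL(2,C)).\<close>
definition parabolic :: "cmat \<Rightarrow> bool" where
  "parabolic A \<longleftrightarrow> (mtrace A = 2 \<or> mtrace A = -2) \<and> \<not> psl_eq A (mat 1)"

definition opnorm :: "cmat \<Rightarrow> real" where
  "opnorm A = onorm (\<lambda>v::complex^2. A *v v)"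

text \<open>Moebius action of a matrix on the affine chart C of P^1 (and on the disk).\<close>
definition mob :: "cmat \<Rightarrow> complex \<Rightarrow> complex" where
  "mob M w = (M$1$1 * w + M$1$2) / (M$2$1 * w + M$2$2)"

text \<open>SU(1,1): the matrices acting isometrically on the Poincare disk (the disk model
  of H^2, with base point 0).\<close>
definition SU11 :: "cmat set" where
  "SU11 = {A. A$2$1 = cnj (A$1$2) \<and> A$2$2 = cnj (A$1$1) \<and>
              (cmod (A$1$1))^2 - (cmod (A$1$2))^2 = 1}"

abbreviation disk :: "complex set" where "disk \<equiv> ball 0 1"

text \<open>Density of the hyperbolic metric 2|dz|/(1-|z|^2) (curvature -1) on the disk.\<close>
definition hyp_density :: "complex \<Rightarrow> real" where
  "hyp_density z = 2 / (1 - (cmod z)^2)"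

text \<open>Fubini-Study (round, curvature 1) density 2|dw|/(1+|w|^2) on the chart C of P^1.\<close>
definition fs_density :: "complex \<Rightarrow> real" where
  "fs_density w = 2 / (1 + (cmod w)^2)"

text \<open>Density of the pullback of the Fubini-Study metric under the Moebius map of M
  (det M = 1), written out in the chart C: |M'(w)| * fs(M w), extended continuously
  through the pole of M.\<close>
definition sph_density :: "cmat \<Rightarrow> complex \<Rightarrow> real" where
  "sph_density M w = 2 / ((cmod (M$1$1 * w + M$1$2))^2 + (cmod (M$2$1 * w + M$2$2))^2)"

text \<open>C-infinity smoothness on an open set: continuous, and all directional derivatives
  exist and are again smooth (greatest fixed point).\<close>
coinductive smooth_on :: "'a::real_normed_vector set \<Rightarrow> ('a \<Rightarrow> 'b::real_normed_vector) \<Rightarrow> bool"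
  where "continuous_on S f \<Longrightarrow>
         (\<And>v. \<exists>g. (\<forall>x\<in>S. ((\<lambda>t::real. f (x + t *\<^sub>R v)) has_vector_derivative g x) (at 0))
                  \<and> smooth_on S g)
         \<Longrightarrow> smooth_on S f"

definition smooth_disk_path :: "(real \<Rightarrow> complex) \<Rightarrow> bool" where
  "smooth_disk_path c \<longleftrightarrow> (\<exists>T. open T \<and> {0..1} \<subseteq> T \<and> smooth_on T c) \<and> c ` {0..1} \<subseteq> disk"

definition hyp_length :: "(real \<Rightarrow> complex) \<Rightarrow> real" where
  "hyp_length c = integral {0..1} (\<lambda>t. hyp_density (c t) * norm (vector_derivative c (at t)))"

text \<open>Gamma = rho_can(G): a discrete, torsion-free subgroup of PSU(1,1) (closed under
  sign) whose quotient of the disk has finite hyperbolic area, i.e. the uniformizing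
  group of a hyperbolic Riemann surface of finite type.\<close>
definition finite_type_fuchsian :: "cmat set \<Rightarrow> bool" where
  "finite_type_fuchsian \<Gamma> \<longleftrightarrow>
     \<Gamma> \<subseteq> SU11 \<and> mat 1 \<in> \<Gamma> \<and>
     (\<forall>A\<in>\<Gamma>. \<forall>B\<in>\<Gamma>. A ** B \<in> \<Gamma>) \<and>
     (\<forall>A\<in>\<Gamma>. matrix_inv A \<in> \<Gamma> \<and> - A \<in> \<Gamma>) \<and>
     (\<forall>A\<in>\<Gamma>. \<exists>e>0. \<forall>B\<in>\<Gamma>. dist B A < e \<longrightarrow> B = A) \<and>
     (\<forall>A\<in>\<Gamma>. \<forall>n>0. psl_eq (mpow A n) (mat 1) \<longrightarrow> psl_eq A (mat 1)) \<and>
     (\<exists>F. F \<in> sets lebesgue \<and> F \<subseteq> disk \<and> (\<Union>A\<in>\<Gamma>. mob A ` F) = disk \<and>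
          (\<integral>\<^sup>+ z. ennreal (indicator F z * (hyp_density z)^2) \<partial>lebesgue) < \<infinity>)"

text \<open>A representation Gamma -> PSL(2,C), given by SL(2,C) representatives, which is
  parabolic (parabolic elements, i.e. loops around punctures, go to parabolic elements).\<close>
definition parabolic_rep :: "cmat set \<Rightarrow> (cmat \<Rightarrow> cmat) \<Rightarrow> bool" where
  "parabolic_rep \<Gamma> \<rho> \<longleftrightarrow>
     (\<forall>A\<in>\<Gamma>. det (\<rho> A) = 1) \<and>
     (\<forall>A\<in>\<Gamma>. psl_eq (\<rho> (- A)) (\<rho> A)) \<and>
     (\<forall>A\<in>\<Gamma>. \<forall>B\<in>\<Gamma>. psl_eq (\<rho> (A ** B)) (\<rho> A ** \<rho> B)) \<and>
     (\<forall>A\<in>\<Gamma>. parabolic A \<longrightarrow> parabolic (\<rho> (A)))"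

text \<open>A family of spherical metrics on the fibres of M_rho = (disk x P^1)/Gamma, lifted to
  disk x P^1: sigma z is the density (in the chart C of P^1) of the metric on the fibre
  over z.  Conditions: each is spherical (pullback of Fubini-Study by a Moebius map),
  smooth in (z,w), Gamma-invariant (so it descends to M_rho), normalized at the base
  point 0, and Lipschitz with constant C: the holonomy of the horizontal foliation along
  a path (the identity map of P^1 in this trivialisation, between the fibre metrics at
  the endpoints of a lift) has log-norm at most C times the hyperbolic length.\<close>
definition normalized_lipschitz_family ::
    "cmat set \<Rightarrow> (cmat \<Rightarrow> cmat) \<Rightarrow> (complex \<Rightarrow> complex \<Rightarrow> real) \<Rightarrow> real \<Rightarrow> bool" where
  "normalized_lipschitz_family \<Gamma> \<rho> \<sigma> C \<longleftrightarrow>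
     (\<forall>z\<in>disk. \<exists>M. det M = 1 \<and> (\<forall>w. \<sigma> z w = sph_density M w)) \<and>
     smooth_on (disk \<times> UNIV) (\<lambda>(z, w). \<sigma> z w) \<and>
     (\<forall>A\<in>\<Gamma>. \<forall>z\<in>disk. \<forall>w. (\<rho> A)$2$1 * w + (\<rho> A)$2$2 \<noteq> 0 \<longrightarrow>
        \<sigma> (mob A z) (mob (\<rho> A) w) * cmod (deriv (mob (\<rho> A)) w) = \<sigma> z w) \<and>
     (\<forall>w. \<sigma> 0 w = fs_density w) \<and>
     (\<forall>c. smooth_disk_path c \<longrightarrow>
        ln (SUP w. \<sigma> (c 1) w / \<sigma> (c 0) w) \<le> C * hyp_length c)"

end

theory Submission
  imports Defs
begin

lemma norm2_sq: "(norm (v::complex^2))^2 = (cmod (v$1))^2 + (cmod (v$2))^2"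
  by (simp add: norm_vec_def L2_set_def sum_2)

lemma mv1: "((M::cmat) *v v)$1 = M$1$1 * v$1 + M$1$2 * v$2"
  by (simp add: matrix_vector_mult_def sum_2)
lemma mv2: "((M::cmat) *v v)$2 = M$2$1 * v$1 + M$2$2 * v$2"
  by (simp add: matrix_vector_mult_def sum_2)

lemma smooth_affine: "smooth_on UNIV (\<lambda>t::real. t *\<^sub>R (p::complex) + q)"
proof -
  have "\<exists>p q. f = (\<lambda>t::real. t *\<^sub>R (p::complex) + q) \<Longrightarrow> smooth_on UNIV f" for f
  proof (coinduction arbitrary: f rule: smooth_on.coinduct)
    case (smooth_on f)
    then obtain p q where f: "f = (\<lambda>t::real. t *\<^sub>R (p::complex) + q)" by blast
    show ?case
    proof (intro exI conjI allI)
      show "continuous_on UNIV f" unfolding f by (intro continuous_intros)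
      fix v :: real
      show "\<forall>x\<in>UNIV. ((\<lambda>t. f (x + t *\<^sub>R v)) has_vector_derivative (\<lambda>t. t *\<^sub>R 0 + v *\<^sub>R p) x) (at 0)"
        unfolding f by (auto intro!: derivative_eq_intros simp: algebra_simps)
    qed (auto, rule exI[of _ 0], auto)
  qed
  then show ?thesis by blast
qed

lemma deriv_mob:
  assumes "det (R::cmat) = 1" "R$2$1 * w + R$2$2 \<noteq> 0"
  shows "deriv (mob R) w = 1 / (R$2$1 * w + R$2$2)^2"
proof -
  have "(mob R has_field_derivative (R$1$1 * (R$2$1 * w + R$2$2) - (R$1$1 * w + R$1$2) * R$2$1) / (R$2$1 * w + R$2$2)^2) (at w)"
    unfolding mob_def using assms(2)
    by (auto intro!: derivative_eq_intros simp: power2_eq_square)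
  moreover have "(R$1$1 * (R$2$1 * w + R$2$2) - (R$1$1 * w + R$1$2) * R$2$1) = 1"
    using assms(1) by (simp add: det_2 algebra_simps)
  ultimately show ?thesis using DERIV_imp_deriv by fastforce
qed

lemma hyp_length_line:
  assumes r: "cmod p < 1"
  shows "hyp_length (\<lambda>t. t *\<^sub>R p) = ln (1 + cmod p) - ln (1 - cmod p)"
proof -
  let ?r = "cmod p"
  have vd: "vector_derivative (\<lambda>t. t *\<^sub>R p) (at t) = p" for t
    by (rule vector_derivative_at) (auto intro!: derivative_eq_intros)
  have eq: "hyp_density (t *\<^sub>R p) * norm (vector_derivative (\<lambda>t. t *\<^sub>R p) (at t))
        = 2 * ?r / (1 - (t * ?r)^2)" if "t \<in> {0..1}" for t
    using that by (simp add: vd hyp_density_def power_mult_distrib)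
  have "((\<lambda>t. 2 * ?r / (1 - (t * ?r)^2)) has_integral
         ((\<lambda>t. ln (1 + t * ?r) - ln (1 - t * ?r)) 1 - (\<lambda>t. ln (1 + t * ?r) - ln (1 - t * ?r)) 0)) {0..1}"
  proof (rule fundamental_theorem_of_calculus)
    fix t :: real assume t: "t \<in> {0..1}"
    have r0: "0 \<le> ?r" by simp
    have "t * ?r \<le> ?r" using t r0 by (simp add: mult_left_le_one_le)
    then have p1: "1 - t * ?r > 0" using r by linarith
    have p2: "1 + t * ?r > 0" using t r0 by (simp add: add_pos_nonneg)
    have "((\<lambda>t. ln (1 + t * ?r) - ln (1 - t * ?r)) has_real_derivative
          (?r / (1 + t * ?r) - (- ?r) / (1 - t * ?r))) (at t within {0..1})"
      using p1 p2 by (auto intro!: derivative_eq_intros)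
    moreover have "?r / (1 + t * ?r) - (- ?r) / (1 - t * ?r) = 2 * ?r / (1 - (t * ?r)^2)"
      using p1 p2 by (simp add: field_simps power2_eq_square)
    ultimately show "((\<lambda>t. ln (1 + t * ?r) - ln (1 - t * ?r)) has_vector_derivative
          2 * ?r / (1 - (t * ?r)^2)) (at t within {0..1})"
      by (simp add: has_real_derivative_iff_has_vector_derivative)
  qed simp
  then have "((\<lambda>t. hyp_density (t *\<^sub>R p) * norm (vector_derivative (\<lambda>t. t *\<^sub>R p) (at t))) has_integral
        (ln (1 + ?r) - ln (1 - ?r))) {0..1}"
    by (subst has_integral_cong[OF eq]) auto
  then show ?thesis unfolding hyp_length_def by (rule integral_unique)
qed

lemma line_path:
  assumes r: "cmod p < 1"
  shows "smooth_disk_path (\<lambda>t. t *\<^sub>R p)"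
  unfolding smooth_disk_path_def
proof
  show "\<exists>T. open T \<and> {0..1} \<subseteq> T \<and> smooth_on T (\<lambda>t. t *\<^sub>R p)"
    using smooth_affine[of p 0] by (intro exI[of _ UNIV]) auto
  show "(\<lambda>t. t *\<^sub>R p) ` {0..1} \<subseteq> disk"
  proof
    fix z assume "z \<in> (\<lambda>t. t *\<^sub>R p) ` {0..1}"
    then obtain t where t: "t \<in> {0..1}" "z = t *\<^sub>R p" by auto
    have "cmod z = t * cmod p" using t by simp
    also have "\<dots> \<le> cmod p" using t by (simp add: mult_left_le_one_le)
    finally show "z \<in> disk" using r by simp
  qed
qed

lemma opnorm_SU11:
  assumes "A \<in> SU11"
  shows "cmod (A$1$1) + cmod (A$1$2) \<le> opnorm A"
proof -
  define a where "a = A$1$1"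
  define b where "b = A$1$2"
  have A21: "A$2$1 = cnj b" and A22: "A$2$2 = cnj a" and ab: "(cmod a)^2 - (cmod b)^2 = 1"
    using assms by (auto simp: SU11_def a_def b_def)
  have a0: "a \<noteq> 0" using ab by (auto simp: power2_eq_square) (smt (verit) mult_nonneg_nonneg norm_ge_zero)
  define w where "w = (if b = 0 then 1 else a * of_real (cmod b) / (of_real (cmod a) * b))"
  define v where "v = (vector [1, w] :: complex^2)"
  have v1: "v$1 = 1" and v2: "v$2 = w" by (simp_all add: v_def)
  have nw: "cmod w = 1" using a0 by (auto simp: w_def norm_mult norm_divide)
  have c1: "cmod (a + b * w) = cmod a + cmod b"
  proof (cases "b = 0")
    case True then show ?thesis by (simp add: w_def)
  next
    case False
    have "a + b * w = a * of_real (1 + cmod b / cmod a)"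
      using False a0 by (simp add: w_def field_simps)
    then have "cmod (a + b * w) = cmod a * (1 + cmod b / cmod a)"
      by (simp only: norm_mult norm_of_real abs_of_nonneg[of "1 + cmod b / cmod a"]
          add_nonneg_nonneg divide_nonneg_nonneg norm_ge_zero zero_le_one)
    then show ?thesis using a0 by (simp add: distrib_left)
  qed
  have c2: "cmod (cnj b + cnj a * w) = cmod a + cmod b"
  proof (cases "b = 0")
    case True
    then have "cmod a = 1" using ab by (simp add: power2_eq_1_iff) (smt (verit) norm_ge_zero)
    then show ?thesis using True by (simp add: w_def)
  next
    case False
    have e1: "cnj a * a = of_real ((cmod a)^2)" by (metis complex_norm_square mult.commute)
    have e2: "cnj b = of_real ((cmod b)^2) / b" using False complex_norm_square[of b] by (simp add: field_simps del: of_real_power)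
    have "cnj b + cnj a * w = of_real (cmod b * (cmod b + cmod a)) / b"
      using False a0 unfolding w_def e2 by (simp add: field_simps e1[symmetric] power2_eq_square)
         (simp add: complex_norm_square[symmetric] power2_eq_square)
    moreover have "cmod (complex_of_real (cmod b) + complex_of_real (cmod a)) = cmod a + cmod b"
      by (metis of_real_add norm_of_real abs_of_nonneg add_nonneg_nonneg norm_ge_zero add.commute)
    ultimately show ?thesis using False by (simp add: norm_mult norm_divide)
  qed
  have "(norm (A *v v))^2 = 2 * (cmod a + cmod b)^2"
    unfolding norm2_sq mv1 mv2 v1 v2 using c1 c2 A21 A22 by (simp add: a_def b_def)
  moreover have nv: "(norm v)^2 = 2" unfolding norm2_sq v1 v2 nw by simp
  moreover have "norm (A *v v) \<le> opnorm A * norm v"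
    unfolding opnorm_def by (rule onorm[OF matrix_vector_mul_bounded_linear])
  ultimately have "sqrt 2 * (cmod a + cmod b) \<le> opnorm A * sqrt 2"
    by (metis abs_of_nonneg norm_ge_zero real_sqrt_abs real_sqrt_mult add_nonneg_nonneg)
  then show ?thesis by (simp add: a_def b_def)
qed

lemma cs2: "((x::real) * p + y * q)^2 \<le> (x^2 + y^2) * (p^2 + q^2)"
proof -
  have "0 \<le> (x * q - y * p)^2" by simp
  then show ?thesis by (simp add: power2_eq_square algebra_simps)
qed

lemma sph_lower:
  assumes "det (M::cmat) = 1"
  shows "1 + (cmod u)^2 \<le> ((cmod (M$1$1))^2 + (cmod (M$1$2))^2 + (cmod (M$2$1))^2 + (cmod (M$2$2))^2)
          * ((cmod (M$1$1 * u + M$1$2))^2 + (cmod (M$2$1 * u + M$2$2))^2)"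
proof -
  define P where "P = M$1$1 * u + M$1$2"
  define Q where "Q = M$2$1 * u + M$2$2"
  have d: "M$1$1 * M$2$2 - M$1$2 * M$2$1 = 1" using assms by (simp add: det_2)
  have eu: "u = M$2$2 * P - M$1$2 * Q"
    unfolding P_def Q_def using d by (simp add: algebra_simps)
  have e1: "1 = M$1$1 * Q - M$2$1 * P"
    unfolding P_def Q_def using d by (simp add: algebra_simps)
  have "cmod u \<le> cmod (M$2$2) * cmod P + cmod (M$1$2) * cmod Q"
    by (subst eu) (metis norm_mult norm_triangle_ineq4)
  then have "(cmod u)^2 \<le> (cmod (M$2$2) * cmod P + cmod (M$1$2) * cmod Q)^2"
    by (simp add: power_mono)
  also have "\<dots> \<le> ((cmod (M$2$2))^2 + (cmod (M$1$2))^2) * ((cmod P)^2 + (cmod Q)^2)" by (rule cs2)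
  finally have i1: "(cmod u)^2 \<le> ((cmod (M$2$2))^2 + (cmod (M$1$2))^2) * ((cmod P)^2 + (cmod Q)^2)" .
  have "1 \<le> cmod (M$1$1) * cmod Q + cmod (M$2$1) * cmod P"
    using e1 by (metis norm_mult norm_one norm_triangle_ineq4)
  then have "1 \<le> (cmod (M$2$1) * cmod P + cmod (M$1$1) * cmod Q)^2"
    by (simp add: add.commute one_le_power)
  also have "\<dots> \<le> ((cmod (M$2$1))^2 + (cmod (M$1$1))^2) * ((cmod P)^2 + (cmod Q)^2)" by (rule cs2)
  finally have i2: "1 \<le> ((cmod (M$2$1))^2 + (cmod (M$1$1))^2) * ((cmod P)^2 + (cmod Q)^2)" .
  show ?thesis using i1 i2 unfolding P_def[symmetric] Q_def[symmetric] by (simp add: algebra_simps)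
qed

lemma aux_frac: "(q::real) \<noteq> 0 \<Longrightarrow> (2*q^4 + 2*(x*q^2))/(2*q^2 + 2*(q^2*y)) = (x+q^2)/(1+y)"
proof -
  assume q: "q \<noteq> 0"
  have "2*q^4 + 2*(x*q^2) = (2*q^2)*(x+q^2)" "2*q^2+2*(q^2*y) = (2*q^2)*(1+y)"
    by (simp_all add: algebra_simps power4_eq_xxxx power2_eq_square)
  then show ?thesis using q by simp
qed

lemma aux2:
  assumes n: "(n::real) > 0" and h: "(X/n)^2 + (Y/n)^2 \<le> S*(1+(m/n)^2)"
  shows "X^2+Y^2 \<le> S*(m^2+n^2)"
proof -
  have "((X/n)^2 + (Y/n)^2) * n^2 \<le> (S*(1+(m/n)^2)) * n^2"
    using h by (rule mult_right_mono) simp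
  moreover have "((X/n)^2 + (Y/n)^2) * n^2 = X^2+Y^2" using n by (simp add: power_divide distrib_right)
  moreover have "(S*(1+(m/n)^2)) * n^2 = S*(m^2+n^2)" using n by (simp add: power_divide algebra_simps)
  ultimately show ?thesis by simp
qed

lemma sup_bound:
  assumes detR: "det (R::cmat) = 1"
    and inv: "\<forall>w. R$2$1 * w + R$2$2 \<noteq> 0 \<longrightarrow> \<tau> (mob R w) * cmod (deriv (mob R) w) = fs_density w"
    and detM: "det (M::cmat) = 1" and sph: "\<forall>u. \<tau> u = sph_density M u"
  shows "(opnorm R)^2 \<le> (SUP u. \<tau> u / fs_density u)"
proof -
  define f where "f u = \<tau> u / fs_density u" for u
  define S where "S = (SUP u. f u)"
  define K where "K = (cmod (M$1$1))^2 + (cmod (M$1$2))^2 + (cmod (M$2$1))^2 + (cmod (M$2$2))^2"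
  have bdd: "bdd_above (range f)"
  proof (rule bdd_aboveI2)
    fix u
    define D where "D = (cmod (M$1$1 * u + M$1$2))^2 + (cmod (M$2$1 * u + M$2$2))^2"
    have lo: "1 + (cmod u)^2 \<le> K * D" using sph_lower[OF detM, of u] unfolding K_def D_def .
    have "0 < 1 + (cmod u)^2" by (simp add: add_pos_nonneg)
    then have KD: "0 < K * D" using lo by linarith
    then have "D \<noteq> 0" by auto
    moreover have "D \<ge> 0" by (simp add: D_def)
    ultimately have Dp: "D > 0" by simp
    have "f u = (1 + (cmod u)^2) / D"
      using Dp unfolding f_def sph[rule_format] sph_density_def fs_density_def D_def[symmetric]
      by (simp add: field_simps add_pos_nonneg)
    also have "\<dots> \<le> K" using lo Dp by (simp add: divide_le_eq)
    finally show "f u \<le> K" .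
  qed
  have b: "(cmod (R$1$1 * w + R$1$2))^2 + (cmod (R$2$1 * w + R$2$2))^2 \<le> S * (1 + (cmod w)^2)"
    if Q: "R$2$1 * w + R$2$2 \<noteq> 0" for w
  proof -
    define P where "P = R$1$1 * w + R$1$2"
    define Q where "Q = R$2$1 * w + R$2$2"
    have Q0: "Q \<noteq> 0" using Q Q_def by simp
    have Qp: "cmod Q > 0" using Q0 by simp
    have "\<tau> (mob R w) * (1 / (cmod Q)^2) = fs_density w"
      using inv[rule_format, OF Q] deriv_mob[OF detR Q] unfolding Q_def by (simp add: norm_divide norm_power)
    then have t: "\<tau> (mob R w) = fs_density w * (cmod Q)^2" using Qp by (simp add: field_simps)
    have m: "mob R w = P / Q" unfolding mob_def P_def Q_def ..
    have fsm: "fs_density (mob R w) = 2 * (cmod Q)^2 / ((cmod Q)^2 + (cmod P)^2)"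
      unfolding m fs_density_def using Qp by (simp add: norm_divide field_simps add_pos_nonneg)
    have "f (mob R w) = ((cmod P)^2 + (cmod Q)^2) / (1 + (cmod w)^2)"
      unfolding f_def t fsm using Qp
      by (simp add: fs_density_def field_simps add_pos_nonneg) (rule aux_frac; use Qp in simp)
    moreover have "f (mob R w) \<le> S" unfolding S_def by (rule cSUP_upper[OF _ bdd]) simp
    ultimately show ?thesis unfolding P_def[symmetric] Q_def[symmetric]
      by (simp add: divide_le_eq add_pos_nonneg)
  qed
  define g where "g v1 v2 = S * ((cmod v1)^2 + (cmod v2)^2)
      - ((cmod (R$1$1 * v1 + R$1$2 * v2))^2 + (cmod (R$2$1 * v1 + R$2$2 * v2))^2)" for v1 v2
  have c: "0 \<le> g v1 v2" if v2: "v2 \<noteq> 0" and Q: "R$2$1 * v1 + R$2$2 * v2 \<noteq> 0" for v1 v2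
  proof -
    define w where "w = v1 / v2"
    have e1: "R$1$1 * w + R$1$2 = (R$1$1 * v1 + R$1$2 * v2) / v2"
     and e2: "R$2$1 * w + R$2$2 = (R$2$1 * v1 + R$2$2 * v2) / v2"
      using v2 by (simp_all add: w_def field_simps)
    have "R$2$1 * w + R$2$2 \<noteq> 0" using e2 Q v2 by simp
    from b[OF this] have "(cmod (R$1$1 * v1 + R$1$2 * v2) / cmod v2)^2 + (cmod (R$2$1 * v1 + R$2$2 * v2) / cmod v2)^2
        \<le> S * (1 + (cmod v1 / cmod v2)^2)"
      unfolding e1 e2 by (simp only: norm_divide w_def)
    from aux2[OF _ this] have "(cmod (R$1$1 * v1 + R$1$2 * v2))^2 + (cmod (R$2$1 * v1 + R$2$2 * v2))^2
        \<le> S * ((cmod v1)^2 + (cmod v2)^2)" using v2 by simp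
    then show ?thesis unfolding g_def by simp
  qed
  have d: "0 \<le> g v1 v2" for v1 v2
  proof -
    obtain x1 x2 where x2: "x2 \<noteq> 0" and xQ: "R$2$1 * x1 + R$2$2 * x2 \<noteq> 0"
    proof (cases "R$2$2 = 0")
      case True
      then have "R$2$1 \<noteq> 0" using detR by (auto simp: det_2)
      then show ?thesis using that[of 1 1] True by simp
    next
      case False then show ?thesis using that[of 1 0] by simp
    qed
    have ev: "eventually (\<lambda>t::real. a + of_real t * b \<noteq> 0) (at_right 0)" if b0: "b \<noteq> (0::complex)" for a b
    proof (cases "a = 0")
      case True then show ?thesis using b0 unfolding eventually_at_right_field
        by (intro exI[of _ 1]) auto
    next
      case False
      show ?thesis unfolding eventually_at_right_field
      proof (intro exI[of _ "cmod a / cmod b"] conjI allI impI)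
        show "0 < cmod a / cmod b" using False b0 by simp
        fix t :: real assume t: "0 < t" "t < cmod a / cmod b"
        then have "cmod (of_real t * b) < cmod a" using b0 by (simp add: norm_mult field_simps)
        then show "a + of_real t * b \<noteq> 0"
          by (metis add.inverse_unique norm_minus_cancel order_less_irrefl)
      qed
    qed
    have ev1: "eventually (\<lambda>t::real. v2 + of_real t * x2 \<noteq> 0) (at_right 0)" using ev[OF x2] .
    have ev2: "eventually (\<lambda>t::real. (R$2$1 * v1 + R$2$2 * v2) + of_real t * (R$2$1 * x1 + R$2$2 * x2) \<noteq> 0) (at_right 0)"
      using ev[OF xQ] .
    have "eventually (\<lambda>t::real. 0 \<le> g (v1 + of_real t * x1) (v2 + of_real t * x2)) (at_right 0)"
      using ev1 ev2
    proof eventually_elim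
      case (elim t)
      have "R$2$1 * (v1 + of_real t * x1) + R$2$2 * (v2 + of_real t * x2)
          = (R$2$1 * v1 + R$2$2 * v2) + of_real t * (R$2$1 * x1 + R$2$2 * x2)"
        by (simp add: algebra_simps)
      then show ?case using c elim by metis
    qed
    moreover have "((\<lambda>t::real. g (v1 + of_real t * x1) (v2 + of_real t * x2)) \<longlongrightarrow> g v1 v2) (at_right 0)"
    proof -
      have "isCont (\<lambda>t::real. g (v1 + of_real t * x1) (v2 + of_real t * x2)) 0"
        unfolding g_def by (intro continuous_intros)
      then show ?thesis by (simp add: isCont_def filterlim_at_split)
    qed
    ultimately show ?thesis by (intro tendsto_lowerbound) auto
  qed
  have "0 \<le> S - ((cmod (R$1$1))^2 + (cmod (R$2$1))^2)" using d[of 1 0] unfolding g_def by simp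
  moreover have "0 \<le> (cmod (R$1$1))^2 + (cmod (R$2$1))^2" by simp
  ultimately have Sge: "0 \<le> S" by linarith
  have "norm (R *v v) \<le> sqrt S * norm v" for v
  proof -
    have "(norm (R *v v))^2 \<le> S * (norm v)^2"
      using d[of "v$1" "v$2"] unfolding g_def norm2_sq mv1 mv2 by simp
    then have "sqrt ((norm (R *v v))^2) \<le> sqrt (S * (norm v)^2)" by (rule real_sqrt_le_mono)
    then show ?thesis by (simp add: real_sqrt_mult)
  qed
  then have "opnorm R \<le> sqrt S" unfolding opnorm_def by (rule onorm_le)
  moreover have "0 \<le> opnorm R" unfolding opnorm_def by (rule onorm_pos_le[OF matrix_vector_mul_bounded_linear])
  ultimately have "(opnorm R)^2 \<le> (sqrt S)^2" by (rule power_mono)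
  then show ?thesis using Sge unfolding S_def f_def by simp
qed

theorem corollary2p3:
  shows "\<exists>\<beta>::real \<Rightarrow> real. \<forall>\<Gamma> \<rho> \<sigma> C.
           finite_type_fuchsian \<Gamma> \<and> parabolic_rep \<Gamma> \<rho> \<and>
           normalized_lipschitz_family \<Gamma> \<rho> \<sigma> C \<longrightarrow>
           (\<forall>A\<in>\<Gamma>. opnorm (\<rho> A) \<le> opnorm A powr \<beta> C)"
proof (intro exI[of _ "\<lambda>C. max C 0"] allI impI ballI)
  fix \<Gamma> \<rho> \<sigma> C A
  assume H: "finite_type_fuchsian \<Gamma> \<and> parabolic_rep \<Gamma> \<rho> \<and> normalized_lipschitz_family \<Gamma> \<rho> \<sigma> C"
    and A: "A \<in> \<Gamma>"
  have ASU: "A \<in> SU11" using H A by (auto simp: finite_type_fuchsian_def)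
  define R where "R = \<rho> A"
  have detR: "det R = 1" using H A by (auto simp: parabolic_rep_def R_def)
  have sph: "\<forall>z\<in>disk. \<exists>M. det M = 1 \<and> (\<forall>w. \<sigma> z w = sph_density M w)"
    and inv0: "\<forall>A\<in>\<Gamma>. \<forall>z\<in>disk. \<forall>w. (\<rho> A)$2$1 * w + (\<rho> A)$2$2 \<noteq> 0 \<longrightarrow>
        \<sigma> (mob A z) (mob (\<rho> A) w) * cmod (deriv (mob (\<rho> A)) w) = \<sigma> z w"
    and norm0: "\<forall>w. \<sigma> 0 w = fs_density w"
    and lip: "\<forall>c. smooth_disk_path c \<longrightarrow> ln (SUP w. \<sigma> (c 1) w / \<sigma> (c 0) w) \<le> C * hyp_length c"
    using H by (auto simp: normalized_lipschitz_family_def)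
  define a where "a = A$1$1"
  define b where "b = A$1$2"
  have A22: "A$2$2 = cnj a" and A21: "A$2$1 = cnj b" and ab: "(cmod a)^2 - (cmod b)^2 = 1"
    using ASU by (auto simp: SU11_def a_def b_def)
  have ab2: "(cmod a)^2 = 1 + (cmod b)^2" using ab by simp
  have a1: "cmod a \<ge> 1"
  proof -
    have "1 \<le> (cmod a)^2" using ab2 by simp
    then show ?thesis by (metis abs_norm_cancel one_le_power abs_le_square_iff abs_one power_one)
  qed
  have bla: "cmod b < cmod a"
  proof -
    have "(cmod b)^2 < (cmod a)^2" using ab2 by simp
    then show ?thesis using a1 by (simp add: power_less_imp_less_base)
  qed
  define p where "p = mob A 0"
  have p: "p = b / cnj a" unfolding p_def mob_def using A22 by (simp add: b_def)
  define r where "r = cmod p"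
  have r: "r = cmod b / cmod a" unfolding r_def p by (simp add: norm_divide)
  have r1: "r < 1" using bla a1 unfolding r by (subst divide_less_eq_1_pos) auto
  have r0: "0 \<le> r" unfolding r_def by simp
  have pd: "p \<in> disk" using r1 unfolding r_def by simp
  define c where "c = (\<lambda>t::real. t *\<^sub>R p)"
  have "ln (SUP w. \<sigma> (c 1) w / \<sigma> (c 0) w) \<le> C * hyp_length c"
    using lip line_path[of p] r1 unfolding c_def r_def by auto
  moreover have "hyp_length c = ln (1 + r) - ln (1 - r)"
    unfolding c_def r_def using hyp_length_line r1 r_def by blast
  moreover have "(\<lambda>w. \<sigma> (c 1) w / \<sigma> (c 0) w) = (\<lambda>u. \<sigma> p u / fs_density u)"
    unfolding c_def using norm0 by simp
  ultimately have lip1: "ln (SUP u. \<sigma> p u / fs_density u) \<le> C * (ln (1 + r) - ln (1 - r))" by metis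
  define L where "L = ln (cmod a + cmod b)"
  have ab1: "cmod a + cmod b \<ge> 1" using a1 norm_ge_zero[of b] by linarith
  have L0: "0 \<le> L" unfolding L_def using ab1 by simp
  have "(cmod a - cmod b) * (cmod a + cmod b) = 1" using ab by (simp add: power2_eq_square algebra_simps)
  then have amb: "cmod a - cmod b = 1 / (cmod a + cmod b)" using ab1 by (simp add: field_simps)
  have ap: "cmod a > 0" using a1 by linarith
  have e1: "1 + r = (cmod a + cmod b) / cmod a" unfolding r using ap by (simp add: field_simps)
  have "1 - r = (cmod a - cmod b) / cmod a" unfolding r using ap by (simp add: diff_divide_distrib)
  then have e2: "1 - r = 1 / (cmod a * (cmod a + cmod b))" unfolding amb
    by (simp add: divide_divide_eq_left mult.commute)
  have HL: "ln (1 + r) - ln (1 - r) = 2 * L"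
  proof -
    have p1: "cmod a + cmod b > 0" using ab1 by simp
    have p2: "cmod a > 0" using ap .
    have "ln (1 + r) = ln (cmod a + cmod b) - ln (cmod a)" unfolding e1 using p1 p2 by (simp add: ln_div)
    moreover have "ln (1 - r) = - ln (cmod a) - ln (cmod a + cmod b)" unfolding e2 using p1 p2
      by (simp add: ln_div ln_mult)
    ultimately show ?thesis unfolding L_def by simp
  qed
  obtain M where M: "det M = 1" "\<forall>w. \<sigma> p w = sph_density M w" using sph pd by blast
  have inv: "\<forall>w. R$2$1 * w + R$2$2 \<noteq> 0 \<longrightarrow> \<sigma> p (mob R w) * cmod (deriv (mob R) w) = fs_density w"
    using inv0 A norm0 unfolding R_def p_def by fastforce
  have SB: "(opnorm R)^2 \<le> (SUP u. \<sigma> p u / fs_density u)"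
    by (rule sup_bound[OF detR inv M])
  have oA: "cmod a + cmod b \<le> opnorm A" using opnorm_SU11[OF ASU] unfolding a_def b_def .
  have oA0: "opnorm A > 0" using oA ab1 by simp
  have LA: "L \<le> ln (opnorm A)" unfolding L_def using oA ab1 by simp
  show "opnorm (\<rho> A) \<le> opnorm A powr max C 0"
  proof (cases "opnorm R = 0")
    case True then show ?thesis unfolding R_def by simp
  next
    case False
    have oR0: "opnorm R > 0" using False onorm_pos_le[OF matrix_vector_mul_bounded_linear, of R]
      unfolding opnorm_def by simp
    have "ln ((opnorm R)^2) \<le> ln (SUP u. \<sigma> p u / fs_density u)"
      using SB oR0 by (intro ln_mono) auto
    also have "\<dots> \<le> C * (2 * L)" using lip1 HL by simp
    finally have "2 * ln (opnorm R) \<le> 2 * (C * L)" using oR0 by (simp add: ln_realpow)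
    then have "ln (opnorm R) \<le> C * L" by simp
    also have "\<dots> \<le> max C 0 * L" using L0 by (simp add: mult_right_mono)
    also have "\<dots> \<le> max C 0 * ln (opnorm A)" using LA by (simp add: mult_left_mono)
    finally have "exp (ln (opnorm R)) \<le> exp (max C 0 * ln (opnorm A))" by simp
    then show ?thesis using oR0 oA0 unfolding R_def by (simp add: powr_def)
  qed
qed

end
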